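(* Let $\mu_Y\in\mathbb{R}$, $\sigma_Y>0$, $n\ge 2$, and let $X_1,\dots,X_n$ be i.i.d. with $X_i\sim LN(\mu_Y,\sigma_Y^2)$. With $A_n=\frac1n\sum_{i=1}^n X_i$, $H_n=n\big/\sum_{i=1}^n (1/X_i)$, $\hat k_n=\frac{n}{n-1}\left(\frac{A_n}{H_n}-1\right)$ and $k=C_v^2=\exp(\sigma_Y^2)-1$, $$\operatorname{Var}(\hat k_n)=\frac{2}{n-1}\,k^2\left(1+k+\frac{k^2}{2n}\right),\qquad \operatorname{sd}(\hat k_n)=k\sqrt{\frac{2}{n-1}\left(1+k+\frac{k^2}{2n}\right)}.$$
   Context: $X\sim LN(\mu_Y,\sigma_Y^2)$ means $\ln X\sim N(\mu_Y,\sigma_Y^2)$. For such $X$, $C_v=\sqrt{\operatorname{Var}(X)}/E[X]$ is the coefficient of variation and $k=E[X]\,E[1/X]-1$; one has $k=C_v^2=\exp(\sigma_Y^2)-1$. $\operatorname{sd}$ denotes the square root of the variance. *)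

theory Defs
  imports "HOL-Probability.Probability"
begin

text \<open>Note: normal_density takes the standard deviation as its second argument.\<close>
definition lognormal_rv :: "'a measure \<Rightarrow> ('a \<Rightarrow> real) \<Rightarrow> real \<Rightarrow> real \<Rightarrow> bool" where
  "lognormal_rv M X m s \<longleftrightarrow>
     X \<in> borel_measurable M \<and> (AE \<omega> in M. X \<omega> > 0) \<and>
     distributed M lborel (\<lambda>\<omega>. ln (X \<omega>)) (normal_density m s)"

end

theory Submission
  imports Defs
begin


lemma normal_exp_shift:
  assumes "s > 0"
  shows "normal_density m s x * exp (c * x) = exp (c*m + (c\<^sup>2 * s\<^sup>2) / 2) * normal_density (m + c * s\<^sup>2) s x"
proof -
  have "-(x - m)\<^sup>2/ (2 * s\<^sup>2) + c * x = c*m + (c\<^sup>2 * s\<^sup>2) / 2 + (-(x - (m + c * s\<^sup>2))\<^sup>2/ (2 * s\<^sup>2))"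
    using assms by (simp add: field_simps power2_eq_square)
  then have "exp (-(x - m)\<^sup>2/ (2 * s\<^sup>2)) * exp (c * x) = exp (c*m + (c\<^sup>2 * s\<^sup>2) / 2) * exp (-(x - (m + c * s\<^sup>2))\<^sup>2/ (2 * s\<^sup>2))"
    by (simp add: exp_add[symmetric])
  then show ?thesis unfolding normal_density_def by (simp add: algebra_simps)
qed

lemma lognormal_mgf:
  assumes "lognormal_rv M X m s" "s > 0"
  shows "integrable M (\<lambda>\<omega>. exp (c * ln (X \<omega>)))"
    and "(\<integral>\<omega>. exp (c * ln (X \<omega>)) \<partial>M) = exp (c*m + (c\<^sup>2 * s\<^sup>2) / 2)"
proof -
  have D: "distributed M lborel (\<lambda>\<omega>. ln (X \<omega>)) (normal_density m s)"
    using assms unfolding lognormal_rv_def by auto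
  have eq: "(\<lambda>x. normal_density m s x * exp (c * x)) = (\<lambda>x. exp (c*m + (c\<^sup>2 * s\<^sup>2) / 2) * normal_density (m + c * s\<^sup>2) s x)"
    using normal_exp_shift[OF assms(2)] by auto
  have "integrable lborel (\<lambda>x. normal_density m s x * exp (c * x))"
    unfolding eq using assms(2) by simp
  then show "integrable M (\<lambda>\<omega>. exp (c * ln (X \<omega>)))"
    using distributed_integrable[OF D, of "\<lambda>x. exp (c * x)"] by simp
  have "(\<integral>x. normal_density m s x * exp (c * x) \<partial>lborel) = exp (c*m + (c\<^sup>2 * s\<^sup>2) / 2)"
    unfolding eq using assms(2) by simp
  then show "(\<integral>\<omega>. exp (c * ln (X \<omega>)) \<partial>M) = exp (c*m + (c\<^sup>2 * s\<^sup>2) / 2)"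
    using distributed_integral[OF D, of "\<lambda>x. exp (c * x)"] by simp
qed

lemma lognormal_prod:
  assumes "prob_space M" "finite I" "prob_space.indep_vars M (\<lambda>_. borel) X I"
    and "\<And>i. i \<in> I \<Longrightarrow> lognormal_rv M (X i) m s" and "s > 0"
  shows "integrable M (\<lambda>\<omega>. \<Prod>t\<in>I. exp (c t * ln (X t \<omega>)))"
    and "(\<integral>\<omega>. (\<Prod>t\<in>I. exp (c t * ln (X t \<omega>))) \<partial>M)
         = exp (m * (\<Sum>t\<in>I. c t) + s\<^sup>2 / 2 * (\<Sum>t\<in>I. (c t)\<^sup>2))"
proof -
  interpret prob_space M by fact
  have ind: "indep_vars (\<lambda>_. borel) (\<lambda>t \<omega>. exp (c t * ln (X t \<omega>))) I"
    by (rule indep_vars_compose2[OF assms(3)]) simp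
  have int: "\<And>t. t \<in> I \<Longrightarrow> integrable M (\<lambda>\<omega>. exp (c t * ln (X t \<omega>)))"
    using lognormal_mgf(1)[OF assms(4) assms(5)] by blast
  show "integrable M (\<lambda>\<omega>. \<Prod>t\<in>I. exp (c t * ln (X t \<omega>)))"
    by (rule indep_vars_integrable[OF assms(2) ind int])
  have "(\<integral>\<omega>. (\<Prod>t\<in>I. exp (c t * ln (X t \<omega>))) \<partial>M)
        = (\<Prod>t\<in>I. \<integral>\<omega>. exp (c t * ln (X t \<omega>)) \<partial>M)"
    by (rule indep_vars_lebesgue_integral[OF assms(2) ind int])
  also have "\<dots> = (\<Prod>t\<in>I. exp (c t * m + (c t)\<^sup>2 * s\<^sup>2 / 2))"
    using lognormal_mgf(2)[OF assms(4) assms(5)] by (intro prod.cong) auto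
  also have "\<dots> = exp (\<Sum>t\<in>I. c t * m + (c t)\<^sup>2 * s\<^sup>2 / 2)"
    by (simp add: exp_sum assms(2))
  also have "(\<Sum>t\<in>I. c t * m + (c t)\<^sup>2 * s\<^sup>2 / 2) = m * (\<Sum>t\<in>I. c t) + s\<^sup>2 / 2 * (\<Sum>t\<in>I. (c t)\<^sup>2)"
    by (simp add: sum.distrib sum_distrib_left sum_distrib_right algebra_simps sum_divide_distrib)
  finally show "(\<integral>\<omega>. (\<Prod>t\<in>I. exp (c t * ln (X t \<omega>))) \<partial>M)
         = exp (m * (\<Sum>t\<in>I. c t) + s\<^sup>2 / 2 * (\<Sum>t\<in>I. (c t)\<^sup>2))" .
qed

definition dl :: "nat \<Rightarrow> nat \<Rightarrow> real" where "dl a b = (if a = b then 1 else 0)"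

lemma sum_dl: "finite I \<Longrightarrow> i \<in> I \<Longrightarrow> (\<Sum>t\<in>I. dl t i * f t) = f i"
  by (simp add: dl_def if_distrib[of "\<lambda>x. x * _"] cong: if_cong)

lemma sum_dl1: "finite I \<Longrightarrow> i \<in> I \<Longrightarrow> (\<Sum>t\<in>I. dl t i) = 1"
  using sum_dl[of I i "\<lambda>_. 1"] by simp

lemma sum_dl2: "finite I \<Longrightarrow> i \<in> I \<Longrightarrow> j \<in> I \<Longrightarrow> (\<Sum>t\<in>I. dl t i * dl t j) = dl i j"
  using sum_dl[of I i "\<lambda>t. dl t j"] by simp

lemma prod_exp_ln4:
  assumes "finite I" "i \<in> I" "j \<in> I" "k \<in> I" "l \<in> I" "\<forall>t\<in>I. x t > (0::real)"
  shows "x i * x j * (1 / x k) * (1 / x l)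
    = (\<Prod>t\<in>I. exp ((dl t i + dl t j - dl t k - dl t l) * ln (x t)))"
proof -
  have "(\<Prod>t\<in>I. exp ((dl t i + dl t j - dl t k - dl t l) * ln (x t)))
      = exp (\<Sum>t\<in>I. (dl t i + dl t j - dl t k - dl t l) * ln (x t))"
    by (simp add: exp_sum assms(1))
  also have "(\<Sum>t\<in>I. (dl t i + dl t j - dl t k - dl t l) * ln (x t))
     = ln (x i) + ln (x j) - ln (x k) - ln (x l)"
    using assms by (simp add: algebra_simps sum.distrib sum_subtractf sum_dl)
  finally show ?thesis using assms
    by (simp add: exp_add exp_diff)
qed

lemma prod_exp_ln2:
  assumes "finite I" "i \<in> I" "j \<in> I" "\<forall>t\<in>I. x t > (0::real)"
  shows "x i * (1 / x j) = (\<Prod>t\<in>I. exp ((dl t i - dl t j) * ln (x t)))"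
proof -
  have "(\<Prod>t\<in>I. exp ((dl t i - dl t j) * ln (x t)))
      = exp (\<Sum>t\<in>I. (dl t i - dl t j) * ln (x t))"
    by (simp add: exp_sum assms(1))
  also have "(\<Sum>t\<in>I. (dl t i - dl t j) * ln (x t)) = ln (x i) - ln (x j)"
    using assms by (simp add: algebra_simps sum.distrib sum_subtractf sum_dl)
  finally show ?thesis using assms
    by (simp add: exp_add exp_diff)
qed

lemma sq4: "(dl t i + dl t j - dl t k - dl t l)\<^sup>2 = dl t i + dl t j + dl t k + dl t l
   + 2 * (dl t i * dl t j) + 2 * (dl t k * dl t l) - 2 * (dl t i * dl t k) - 2 * (dl t i * dl t l)
   - 2 * (dl t j * dl t k) - 2 * (dl t j * dl t l)"
  by (simp add: dl_def power2_eq_square)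

lemma sums4:
  assumes "finite I" "i \<in> I" "j \<in> I" "k \<in> I" "l \<in> I"
  shows "(\<Sum>t\<in>I. dl t i + dl t j - dl t k - dl t l) = 0"
    and "(\<Sum>t\<in>I. (dl t i + dl t j - dl t k - dl t l)\<^sup>2)
      = 4 + 2 * dl i j + 2 * dl k l - 2 * dl i k - 2 * dl i l - 2 * dl j k - 2 * dl j l"
  using assms by (simp_all add: sum.distrib sum_subtractf sum_dl1 sum_dl2 sq4 sum_distrib_left[symmetric])

lemma sums2:
  assumes "finite I" "i \<in> I" "j \<in> I"
  shows "(\<Sum>t\<in>I. dl t i - dl t j) = 0"
    and "(\<Sum>t\<in>I. (dl t i - dl t j)\<^sup>2) = 2 - 2 * dl i j"
proof -
  have sq: "\<And>t. (dl t i - dl t j)\<^sup>2 = dl t i + dl t j - 2 * (dl t i * dl t j)"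
    by (simp add: dl_def power2_eq_square)
  show "(\<Sum>t\<in>I. dl t i - dl t j) = 0" "(\<Sum>t\<in>I. (dl t i - dl t j)\<^sup>2) = 2 - 2 * dl i j"
    using assms by (simp_all add: sum.distrib sum_subtractf sum_dl1 sum_dl2 sq sum_distrib_left[symmetric])
qed


definition phi :: "real \<Rightarrow> nat \<Rightarrow> nat \<Rightarrow> real" where "phi q a b = (if a = b then q else 1)"

lemma exp_dl: "exp (c * dl a b) = phi (exp c) a b"
  by (simp add: dl_def phi_def)

lemma exp4: "exp (s\<^sup>2 * (2 + dl i j + dl k l - dl i k - dl i l - dl j k - dl j l))
  = (exp (s\<^sup>2))\<^sup>2 * phi (exp (s\<^sup>2)) i j * phi (exp (s\<^sup>2)) k l /
     (phi (exp (s\<^sup>2)) i k * phi (exp (s\<^sup>2)) i l * phi (exp (s\<^sup>2)) j k * phi (exp (s\<^sup>2)) j l)"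
proof -
  have eq: "s\<^sup>2 * (2 + dl i j + dl k l - dl i k - dl i l - dl j k - dl j l)
    = s\<^sup>2 + s\<^sup>2 + s\<^sup>2 * dl i j + s\<^sup>2 * dl k l - s\<^sup>2 * dl i k - s\<^sup>2 * dl i l - s\<^sup>2 * dl j k - s\<^sup>2 * dl j l"
    by (simp add: algebra_simps)
  have "exp (s\<^sup>2 * (2 + dl i j + dl k l - dl i k - dl i l - dl j k - dl j l))
    = exp (s\<^sup>2) * exp (s\<^sup>2) * exp (s\<^sup>2 * dl i j) * exp (s\<^sup>2 * dl k l) / exp (s\<^sup>2 * dl i k)
      / exp (s\<^sup>2 * dl i l) / exp (s\<^sup>2 * dl j k) / exp (s\<^sup>2 * dl j l)"
    by (simp only: eq exp_add exp_diff)
  also have "\<dots> = exp (s\<^sup>2) * exp (s\<^sup>2) * phi (exp (s\<^sup>2)) i j * phi (exp (s\<^sup>2)) k l / phi (exp (s\<^sup>2)) i k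
      / phi (exp (s\<^sup>2)) i l / phi (exp (s\<^sup>2)) j k / phi (exp (s\<^sup>2)) j l"
    by (simp only: exp_dl)
  finally show ?thesis by (simp only: divide_divide_eq_left power2_eq_square mult.assoc)
qed

lemma exp2: "exp (s\<^sup>2 * (1 - dl i j)) = exp (s\<^sup>2) / phi (exp (s\<^sup>2)) i j"
  by (simp add: right_diff_distrib exp_diff exp_dl)

lemma phi_pos: "q > 0 \<Longrightarrow> phi q a b > 0"
  by (simp add: phi_def)

lemma sum_if1:
  assumes "finite I" "i \<in> I"
  shows "(\<Sum>t\<in>I. if t = i then a else b) = a + (real (card I) - 1) * (b::real)"
proof -
  have "(\<Sum>t\<in>I. if t = i then a else b) = (if i = i then a else b) + (\<Sum>t\<in>I - {i}. if t = i then a else b)"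
    using assms by (simp add: sum.remove)
  also have "(\<Sum>t\<in>I - {i}. if t = i then a else b) = (\<Sum>t\<in>I - {i}. b)"
    by (rule sum.cong) auto
  moreover have "card I \<ge> 1" using assms by (metis One_nat_def Suc_leI card_gt_0_iff empty_iff)
  ultimately show ?thesis using assms by (simp add: card_Diff_singleton of_nat_diff algebra_simps)
qed

lemma sum_if2:
  assumes "finite I" "i \<in> I" "j \<in> I" "i \<noteq> j"
  shows "(\<Sum>t\<in>I. if t = i then a else if t = j then a else b) = 2 * a + (real (card I) - 2) * (b::real)"
proof -
  have "(\<Sum>t\<in>I. if t = i then a else if t = j then a else b) = a + (\<Sum>t\<in>I - {i}. if t = i then a else if t = j then a else b)"
    using assms by (simp add: sum.remove)
  also have "(\<Sum>t\<in>I - {i}. if t = i then a else if t = j then a else b) = (\<Sum>t\<in>I - {i}. if t = j then a else b)"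
    by (rule sum.cong) auto
  also have "\<dots> = a + (real (card (I - {i})) - 1) * b"
    using assms by (intro sum_if1) auto
  also have "real (card (I - {i})) = real (card I) - 1"
  proof -
    have "card I \<ge> 1" using assms by (metis One_nat_def Suc_leI card_gt_0_iff empty_iff)
    then show ?thesis using assms by (simp add: card_Diff_singleton of_nat_diff)
  qed
  also have "a + (a + (real (card I) - 1 - 1) * b) = 2 * a + (real (card I) - 2) * b"
    by (simp add: algebra_simps)
  finally show ?thesis .
qed

lemma sumG:
  assumes "finite I"
  shows "(\<Sum>k\<in>I. \<Sum>l\<in>I. f k * f l * phi q k l) = (\<Sum>t\<in>I. f t)\<^sup>2 + (q - 1) * (\<Sum>t\<in>I. (f t)\<^sup>2)"
proof -
  have "\<And>k l. f k * f l * phi q k l = f k * f l + (q - 1) * (f k * (dl l k * f l))"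
    by (simp add: phi_def dl_def algebra_simps)
  then have "(\<Sum>k\<in>I. \<Sum>l\<in>I. f k * f l * phi q k l) = (\<Sum>k\<in>I. \<Sum>l\<in>I. f k * f l + (q - 1) * (f k * (dl l k * f l)))"
    by simp
  also have "\<dots> = (\<Sum>k\<in>I. f k * (\<Sum>l\<in>I. f l) + (q - 1) * (f k * f k))"
    using assms by (simp add: sum.distrib sum_distrib_left[symmetric] sum_dl)
  also have "\<dots> = (\<Sum>t\<in>I. f t)\<^sup>2 + (q - 1) * (\<Sum>t\<in>I. (f t)\<^sup>2)"
    by (simp add: sum.distrib sum_distrib_left[symmetric] sum_distrib_right[symmetric] power2_eq_square)
  finally show ?thesis .
qed

lemma sumW:
  assumes "finite I" "q > 0"
  shows "(\<Sum>i\<in>I. \<Sum>j\<in>I. \<Sum>k\<in>I. \<Sum>l\<in>I. q\<^sup>2 * phi q i j * phi q k l / (phi q i k * phi q i l * phi q j k * phi q j l))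
    = real (card I) * (q^3 * ((1/q\<^sup>2 + (real (card I) - 1) * 1)\<^sup>2 + (q - 1) * (1/q^4 + (real (card I) - 1) * 1)))
    + real (card I) * ((real (card I) - 1) * (q\<^sup>2 * ((2 * (1/q) + (real (card I) - 2) * 1)\<^sup>2 + (q - 1) * (2 * (1/q\<^sup>2) + (real (card I) - 2) * 1))))"
    (is "?L = ?R")
proof -
  let ?n = "real (card I)"
  define Ieq where "Ieq = (1/q\<^sup>2 + (?n - 1) * 1)\<^sup>2 + (q - 1) * (1/q^4 + (?n - 1) * 1)"
  define Ine where "Ine = (2 * (1/q) + (?n - 2) * 1)\<^sup>2 + (q - 1) * (2 * (1/q\<^sup>2) + (?n - 2) * 1)"
  have inner: "(\<Sum>k\<in>I. \<Sum>l\<in>I. q\<^sup>2 * phi q i j * phi q k l / (phi q i k * phi q i l * phi q j k * phi q j l))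
      = (if j = i then q^3 * Ieq else q\<^sup>2 * Ine)" if ij: "i \<in> I" "j \<in> I" for i j
  proof -
    define f where "f t = 1 / (phi q i t * phi q j t)" for t
    have "(\<Sum>k\<in>I. \<Sum>l\<in>I. q\<^sup>2 * phi q i j * phi q k l / (phi q i k * phi q i l * phi q j k * phi q j l))
        = (\<Sum>k\<in>I. \<Sum>l\<in>I. q\<^sup>2 * phi q i j * (f k * f l * phi q k l))"
      by (intro sum.cong refl) (simp add: f_def)
    also have "\<dots> = q\<^sup>2 * phi q i j * (\<Sum>k\<in>I. \<Sum>l\<in>I. f k * f l * phi q k l)"
      by (simp add: sum_distrib_left)
    also have "\<dots> = q\<^sup>2 * phi q i j * ((\<Sum>t\<in>I. f t)\<^sup>2 + (q - 1) * (\<Sum>t\<in>I. (f t)\<^sup>2))"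
      using assms(1) by (simp add: sumG)
    also have "\<dots> = (if j = i then q^3 * Ieq else q\<^sup>2 * Ine)"
    proof (cases "i = j")
      case True
      have f1: "(\<Sum>t\<in>I. f t) = (\<Sum>t\<in>I. if t = i then 1/q\<^sup>2 else 1)"
        by (intro sum.cong refl) (auto simp: f_def phi_def True power2_eq_square)
      have f2: "(\<Sum>t\<in>I. (f t)\<^sup>2) = (\<Sum>t\<in>I. if t = i then 1/q^4 else 1)"
        by (intro sum.cong refl) (auto simp: f_def phi_def True power2_eq_square power4_eq_xxxx)
      have g1: "(\<Sum>t\<in>I. f t) = 1/q\<^sup>2 + (?n - 1) * 1" unfolding f1 by (rule sum_if1) (use assms ij in auto)
      have g2: "(\<Sum>t\<in>I. (f t)\<^sup>2) = 1/q^4 + (?n - 1) * 1" unfolding f2 by (rule sum_if1) (use assms ij in auto)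
      have pq: "phi q i j = q" using True by (simp add: phi_def)
      show ?thesis unfolding g1 g2 pq Ieq_def using True by (simp add: power3_eq_cube power2_eq_square)
    next
      case False
      have f1: "(\<Sum>t\<in>I. f t) = (\<Sum>t\<in>I. if t = i then 1/q else if t = j then 1/q else 1)"
        by (intro sum.cong refl) (use False in \<open>auto simp: f_def phi_def\<close>)
      have f2: "(\<Sum>t\<in>I. (f t)\<^sup>2) = (\<Sum>t\<in>I. if t = i then 1/q\<^sup>2 else if t = j then 1/q\<^sup>2 else 1)"
        by (intro sum.cong refl) (use False in \<open>auto simp: f_def phi_def power2_eq_square\<close>)
      have g1: "(\<Sum>t\<in>I. f t) = 2 * (1/q) + (?n - 2) * 1" unfolding f1 by (rule sum_if2) (use assms ij False in auto)
      have g2: "(\<Sum>t\<in>I. (f t)\<^sup>2) = 2 * (1/q\<^sup>2) + (?n - 2) * 1" unfolding f2 by (rule sum_if2) (use assms ij False in auto)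
      have pq: "phi q i j = 1" using False by (simp add: phi_def)
      show ?thesis unfolding g1 g2 pq Ine_def using False by simp
    qed
    finally show ?thesis .
  qed
  have "?L = (\<Sum>i\<in>I. \<Sum>j\<in>I. if j = i then q^3 * Ieq else q\<^sup>2 * Ine)"
    using inner by (intro sum.cong refl) auto
  also have "\<dots> = (\<Sum>i\<in>I. q^3 * Ieq + (?n - 1) * (q\<^sup>2 * Ine))"
    using assms(1) by (intro sum.cong refl sum_if1) auto
  also have "\<dots> = ?R"
    by (simp add: Ieq_def Ine_def distrib_left)
  finally show ?thesis .
qed

lemma sumV:
  assumes "finite I" "q > 0"
  shows "(\<Sum>i\<in>I. \<Sum>j\<in>I. q / phi q i j) = real (card I) * (1 + (real (card I) - 1) * q)"
proof -
  have "(\<Sum>i\<in>I. \<Sum>j\<in>I. q / phi q i j) = (\<Sum>i\<in>I. \<Sum>j\<in>I. if j = i then 1 else q)"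
    using assms by (intro sum.cong refl) (auto simp: phi_def)
  also have "\<dots> = (\<Sum>i\<in>I. 1 + (real (card I) - 1) * q)"
    using assms(1) by (intro sum.cong refl) (simp add: sum_if1)
  finally show ?thesis by simp
qed


lemma final_alg:
  fixes q n :: real
  assumes "q > 0" "n \<ge> 2"
  shows "(n * (q^3 * ((1/q\<^sup>2 + (n - 1) * 1)\<^sup>2 + (q - 1) * (1/q^4 + (n - 1) * 1)))
    + n * ((n - 1) * (q\<^sup>2 * ((2 * (1/q) + (n - 2) * 1)\<^sup>2 + (q - 1) * (2 * (1/q\<^sup>2) + (n - 2) * 1))))
    - (n * (1 + (n - 1) * q))\<^sup>2) / (n * (n - 1))\<^sup>2
    = 2 / (n - 1) * (q - 1)\<^sup>2 * (1 + (q - 1) + (q - 1)\<^sup>2 / (2 * n))"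
proof -
  have n1: "n - 1 \<noteq> 0" "n \<noteq> 0" using assms by auto
  have q: "q \<noteq> 0" using assms by auto
  have "n * (q^3 * ((1/q\<^sup>2 + (n - 1) * 1)\<^sup>2 + (q - 1) * (1/q^4 + (n - 1) * 1)))
    + n * ((n - 1) * (q\<^sup>2 * ((2 * (1/q) + (n - 2) * 1)\<^sup>2 + (q - 1) * (2 * (1/q\<^sup>2) + (n - 2) * 1))))
    - (n * (1 + (n - 1) * q))\<^sup>2 = n * (n - 1) * (q - 1)\<^sup>2 * ((q - 1)\<^sup>2 + 2 * n * q)"
    using q by (simp add: field_simps power2_eq_square power3_eq_cube power4_eq_xxxx)
  also have "n * (n - 1) * (q - 1)\<^sup>2 * ((q - 1)\<^sup>2 + 2 * n * q) = (n * (n - 1))\<^sup>2 * (2 / (n - 1) * (q - 1)\<^sup>2 * (1 + (q - 1) + (q - 1)\<^sup>2 / (2 * n)))"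
    using n1 by (simp add: field_simps power2_eq_square)
  finally show ?thesis using n1 by simp
qed


lemma khat_alg:
  fixes S T n :: real assumes "n \<ge> 2"
  shows "n / (n - 1) * ((S / n) / (n / T) - 1) = (S * T - n\<^sup>2) / (n * (n - 1))"
  using assms by (simp add: field_simps power2_eq_square)

lemma sq_expand:
  fixes S T :: real
  shows "(S * T)\<^sup>2 = (S * S) * (T * T)" by (simp add: power2_eq_square)

theorem proposition4:
  fixes M :: "'a measure" and X :: "nat \<Rightarrow> 'a \<Rightarrow> real"
    and mY sY :: real and n :: nat
  assumes "prob_space M"
    and "sY > 0" and "n \<ge> 2"
    and "prob_space.indep_vars M (\<lambda>_. borel) X {1..n}"
    and "\<And>i. i \<in> {1..n} \<Longrightarrow> lognormal_rv M (X i) mY sY"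
  defines "khat \<equiv> (\<lambda>\<omega>. real n / (real n - 1) *
               (((\<Sum>i=1..n. X i \<omega>) / real n) / (real n / (\<Sum>i=1..n. 1 / X i \<omega>)) - 1))"
    and "k \<equiv> exp (sY\<^sup>2) - 1"
  shows "prob_space.variance M khat
           = 2 / (real n - 1) * k\<^sup>2 * (1 + k + k\<^sup>2 / (2 * real n))
     \<and> sqrt (prob_space.variance M khat)
           = k * sqrt (2 / (real n - 1) * (1 + k + k\<^sup>2 / (2 * real n)))"
proof -
  interpret prob_space M by fact
  define I where "I = {1..n}"
  have fin: "finite I" by (simp add: I_def)
  have cardI: "card I = n" by (simp add: I_def)
  define q where "q = exp (sY\<^sup>2)"
  have qpos: "q > 0" by (simp add: q_def)
  have kq: "k = q - 1" by (simp add: k_def q_def)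
  have meas: "\<And>t. t \<in> I \<Longrightarrow> X t \<in> borel_measurable M"
    using assms(5) unfolding I_def lognormal_rv_def by blast
  have pos: "AE \<omega> in M. \<forall>t\<in>I. X t \<omega> > 0"
    using fin by (rule AE_finite_allI) (use assms(5) in \<open>auto simp: I_def lognormal_rv_def\<close>)
  have indI: "indep_vars (\<lambda>_. borel) X I" using assms(4) by (simp add: I_def)
  have lnI: "\<And>i. i \<in> I \<Longrightarrow> lognormal_rv M (X i) mY sY" using assms(5) by (simp add: I_def)
  define P4 where "P4 i j k' l \<omega> = X i \<omega> * X j \<omega> * (1 / X k' \<omega>) * (1 / X l \<omega>)" for i j k' l \<omega>
  define P2 where "P2 i j \<omega> = X i \<omega> * (1 / X j \<omega>)" for i j \<omega>
  have E4: "integrable M (P4 i j k' l) \<and> integral\<^sup>L M (P4 i j k' l)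
      = q\<^sup>2 * phi q i j * phi q k' l / (phi q i k' * phi q i l * phi q j k' * phi q j l)"
    if h: "i \<in> I" "j \<in> I" "k' \<in> I" "l \<in> I" for i j k' l
  proof -
    define c where "c t = dl t i + dl t j - dl t k' - dl t l" for t
    note L = lognormal_prod[OF assms(1) fin indI lnI assms(2), of c]
    have mP: "P4 i j k' l \<in> borel_measurable M"
      unfolding P4_def using meas h by measurable
    have ae: "AE \<omega> in M. (\<Prod>t\<in>I. exp (c t * ln (X t \<omega>))) = P4 i j k' l \<omega>"
      using pos
    proof eventually_elim
      case (elim \<omega>)
      have "P4 i j k' l \<omega> = (\<Prod>t\<in>I. exp (c t * ln (X t \<omega>)))"
        unfolding P4_def c_def by (rule prod_exp_ln4[OF fin h]) (use elim in simp)
      then show ?case by simp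
    qed
    have mQ: "(\<lambda>\<omega>. \<Prod>t\<in>I. exp (c t * ln (X t \<omega>))) \<in> borel_measurable M"
      using meas by measurable
    have "integral\<^sup>L M (P4 i j k' l) = (\<integral>\<omega>. (\<Prod>t\<in>I. exp (c t * ln (X t \<omega>))) \<partial>M)"
      by (rule integral_cong_AE[OF mP mQ]) (use ae in \<open>auto elim: AE_mp\<close>)
    also have "\<dots> = exp (mY * (\<Sum>t\<in>I. c t) + sY\<^sup>2 / 2 * (\<Sum>t\<in>I. (c t)\<^sup>2))" by (rule L(2))
    also have "\<dots> = exp (sY\<^sup>2 * (2 + dl i j + dl k' l - dl i k' - dl i l - dl j k' - dl j l))"
      unfolding c_def sums4[OF fin h] by (simp add: algebra_simps)
    also have "\<dots> = q\<^sup>2 * phi q i j * phi q k' l / (phi q i k' * phi q i l * phi q j k' * phi q j l)"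
      unfolding q_def by (rule exp4)
    finally show ?thesis using integrable_cong_AE_imp[OF L(1) mP ae] by blast
  qed
  have E2: "integrable M (P2 i j) \<and> integral\<^sup>L M (P2 i j) = q / phi q i j"
    if h: "i \<in> I" "j \<in> I" for i j
  proof -
    define c where "c t = dl t i - dl t j" for t
    note L = lognormal_prod[OF assms(1) fin indI lnI assms(2), of c]
    have mP: "P2 i j \<in> borel_measurable M"
      unfolding P2_def using meas h by measurable
    have ae: "AE \<omega> in M. (\<Prod>t\<in>I. exp (c t * ln (X t \<omega>))) = P2 i j \<omega>"
      using pos
    proof eventually_elim
      case (elim \<omega>)
      have "P2 i j \<omega> = (\<Prod>t\<in>I. exp (c t * ln (X t \<omega>)))"
        unfolding P2_def c_def by (rule prod_exp_ln2[OF fin h]) (use elim in simp)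
      then show ?case by simp
    qed
    have mQ: "(\<lambda>\<omega>. \<Prod>t\<in>I. exp (c t * ln (X t \<omega>))) \<in> borel_measurable M"
      using meas by measurable
    have "integral\<^sup>L M (P2 i j) = (\<integral>\<omega>. (\<Prod>t\<in>I. exp (c t * ln (X t \<omega>))) \<partial>M)"
      by (rule integral_cong_AE[OF mP mQ]) (use ae in \<open>auto elim: AE_mp\<close>)
    also have "\<dots> = exp (mY * (\<Sum>t\<in>I. c t) + sY\<^sup>2 / 2 * (\<Sum>t\<in>I. (c t)\<^sup>2))" by (rule L(2))
    also have "\<dots> = exp (sY\<^sup>2 * (1 - dl i j))"
      unfolding c_def sums2[OF fin h] by (simp add: algebra_simps)
    also have "\<dots> = q / phi q i j"
      unfolding q_def by (rule exp2)
    finally show ?thesis using integrable_cong_AE_imp[OF L(1) mP ae] by blast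
  qed
  define V where "V \<omega> = (\<Sum>i\<in>I. \<Sum>j\<in>I. P2 i j \<omega>)" for \<omega>
  define W where "W \<omega> = (\<Sum>i\<in>I. \<Sum>j\<in>I. \<Sum>k'\<in>I. \<Sum>l\<in>I. P4 i j k' l \<omega>)" for \<omega>
  have intV: "integrable M V" unfolding V_def by (intro Bochner_Integration.integrable_sum) (use E2 in auto)
  have intW: "integrable M W" unfolding W_def by (intro Bochner_Integration.integrable_sum) (use E4 in auto)
  have EV: "integral\<^sup>L M V = real n * (1 + (real n - 1) * q)"
  proof -
    have "integral\<^sup>L M V = (\<Sum>i\<in>I. \<Sum>j\<in>I. integral\<^sup>L M (P2 i j))"
      unfolding V_def using E2 by (simp add: Bochner_Integration.integral_sum Bochner_Integration.integrable_sum)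
    also have "\<dots> = (\<Sum>i\<in>I. \<Sum>j\<in>I. q / phi q i j)"
      using E2 by (intro sum.cong refl) auto
    finally show ?thesis using sumV[OF fin qpos] cardI by simp
  qed
  have EW: "integral\<^sup>L M W = real n * (q^3 * ((1/q\<^sup>2 + (real n - 1) * 1)\<^sup>2 + (q - 1) * (1/q^4 + (real n - 1) * 1)))
    + real n * ((real n - 1) * (q\<^sup>2 * ((2 * (1/q) + (real n - 2) * 1)\<^sup>2 + (q - 1) * (2 * (1/q\<^sup>2) + (real n - 2) * 1))))"
  proof -
    have "integral\<^sup>L M W = (\<Sum>i\<in>I. \<Sum>j\<in>I. \<Sum>k'\<in>I. \<Sum>l\<in>I. integral\<^sup>L M (P4 i j k' l))"
      unfolding W_def using E4 by (simp add: Bochner_Integration.integral_sum Bochner_Integration.integrable_sum)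
    also have "\<dots> = (\<Sum>i\<in>I. \<Sum>j\<in>I. \<Sum>k'\<in>I. \<Sum>l\<in>I. q\<^sup>2 * phi q i j * phi q k' l / (phi q i k' * phi q i l * phi q j k' * phi q j l))"
      using E4 by (intro sum.cong refl) auto
    finally show ?thesis using sumW[OF fin qpos] cardI by simp
  qed
  have khat_eq: "khat \<omega> = (V \<omega> - (real n)\<^sup>2) / (real n * (real n - 1))" for \<omega>
  proof -
    have "V \<omega> = (\<Sum>i\<in>I. X i \<omega>) * (\<Sum>j\<in>I. 1 / X j \<omega>)"
      unfolding V_def P2_def by (simp add: sum_product)
    then show ?thesis unfolding khat_def I_def[symmetric]
      using khat_alg[of "real n" "\<Sum>i\<in>I. X i \<omega>" "\<Sum>j\<in>I. 1 / X j \<omega>"] assms(3) by simp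
  qed
  have W_eq: "W \<omega> = (V \<omega>)\<^sup>2" for \<omega>
  proof -
    have "V \<omega> = (\<Sum>i\<in>I. X i \<omega>) * (\<Sum>j\<in>I. 1 / X j \<omega>)"
      unfolding V_def P2_def by (simp add: sum_product)
    then have "(V \<omega>)\<^sup>2 = ((\<Sum>i\<in>I. X i \<omega>) * (\<Sum>i\<in>I. X i \<omega>)) * ((\<Sum>j\<in>I. 1 / X j \<omega>) * (\<Sum>j\<in>I. 1 / X j \<omega>))"
      by (simp add: sq_expand)
    also have "\<dots> = (\<Sum>i\<in>I. \<Sum>j\<in>I. X i \<omega> * X j \<omega>) * (\<Sum>k'\<in>I. \<Sum>l\<in>I. 1 / X k' \<omega> * (1 / X l \<omega>))"
      by (simp only: sum_product)
    also have "\<dots> = (\<Sum>i\<in>I. \<Sum>j\<in>I. X i \<omega> * X j \<omega> * (\<Sum>k'\<in>I. \<Sum>l\<in>I. 1 / X k' \<omega> * (1 / X l \<omega>)))"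
      by (simp only: sum_distrib_right)
    also have "\<dots> = W \<omega>"
      unfolding W_def P4_def by (simp only: sum_distrib_left mult.assoc)
    finally show ?thesis by simp
  qed
  define D where "D = real n * (real n - 1)"
  have Dpos: "D > 0" using assms(3) by (simp add: D_def)
  define e where "e = real n * (1 + (real n - 1) * q)"
  have Ekhat: "expectation khat = k"
  proof -
    have "expectation khat = (\<integral>\<omega>. (V \<omega> - (real n)\<^sup>2) / D \<partial>M)"
      unfolding khat_eq D_def by simp
    also have "\<dots> = (integral\<^sup>L M V - (real n)\<^sup>2) / D"
      using intV by (simp add: prob_space)
    also have "\<dots> = k" unfolding EV kq D_def using assms(3) by (simp add: field_simps power2_eq_square)
    finally show ?thesis .
  qed
  have var: "variance khat = (integral\<^sup>L M W - e\<^sup>2) / D\<^sup>2"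
  proof -
    have pt: "(khat \<omega> - k)\<^sup>2 = W \<omega> / D\<^sup>2 - (2 * e / D\<^sup>2) * V \<omega> + e\<^sup>2 / D\<^sup>2" for \<omega>
    proof -
      have kD: "khat \<omega> = (V \<omega> - (real n)\<^sup>2) / D" by (simp add: khat_eq D_def)
      have e_eq: "e = (real n)\<^sup>2 + D * (q - 1)" by (simp add: e_def D_def algebra_simps power2_eq_square)
      have "khat \<omega> - k = (V \<omega> - e) / D"
        unfolding kD e_eq kq using Dpos by (simp add: field_simps)
      then have "(khat \<omega> - k)\<^sup>2 = ((V \<omega> - e) / D)\<^sup>2" by simp
      also have "\<dots> = W \<omega> / D\<^sup>2 - (2 * e / D\<^sup>2) * V \<omega> + e\<^sup>2 / D\<^sup>2"
        unfolding W_eq using Dpos by (simp add: field_simps power2_eq_square)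
      finally show ?thesis .
    qed
    have "variance khat = (\<integral>\<omega>. W \<omega> / D\<^sup>2 - (2 * e / D\<^sup>2) * V \<omega> + e\<^sup>2 / D\<^sup>2 \<partial>M)"
      unfolding Ekhat pt ..
    also have "\<dots> = integral\<^sup>L M W / D\<^sup>2 - (2 * e / D\<^sup>2) * integral\<^sup>L M V + e\<^sup>2 / D\<^sup>2"
      using intV intW by (simp add: prob_space)
    also have "\<dots> = (integral\<^sup>L M W - e\<^sup>2) / D\<^sup>2"
      unfolding EV e_def[symmetric] using Dpos by (simp add: field_simps power2_eq_square)
    finally show ?thesis .
  qed
  have V1: "variance khat = 2 / (real n - 1) * k\<^sup>2 * (1 + k + k\<^sup>2 / (2 * real n))"
    unfolding var EW e_def D_def kq
    using final_alg[OF qpos, of "real n"] assms(3) by simp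
  have kpos: "k > 0" unfolding k_def using assms(2) by simp
  have "sqrt (variance khat) = sqrt (k\<^sup>2 * (2 / (real n - 1) * (1 + k + k\<^sup>2 / (2 * real n))))"
    unfolding V1 by (simp add: ac_simps)
  also have "\<dots> = k * sqrt (2 / (real n - 1) * (1 + k + k\<^sup>2 / (2 * real n)))"
    by (simp only: real_sqrt_mult real_sqrt_abs abs_of_pos[OF kpos])
  finally show ?thesis using V1 by simp
qed


end
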